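(* Let $P$ be a finite poset and $R$ a weakly-consistent restriction function on $P$. Then the poset $\Gamma'(P,R)$ is isomorphic to the dual of the poset of meet-irreducible elements of the lattice $\mathrm{WInc}^R(P)$. Consequently, the order ideals of $\Gamma'(P,R)$ are in bijection with $\mathrm{WInc}^R(P)$.
   Context: A restriction function assigns to each $p\in P$ a nonempty finite $R(p)\subseteq\mathbb{Z}$. It is weakly-consistent if for every cover $x\lessdot y$ in $P$, $\min R(x)\le\min R(y)$ and $\max R(x)\le\max R(y)$. $\mathrm{WInc}^R(P)$ is the set of $f:P\to\mathbb{Z}$ with $f(p)\in R(p)$ and $p_1<p_2\Rightarrow f(p_1)\le f(p_2)$, ordered pointwise (a distributive lattice with pointwise min/max). An element is meet-irreducible if it is not the top and $x=y\wedge z$ implies $x\in\{y,z\}$. $R(p)^*=R(p)\setminus\{\max R(p)\}$; $R(p)_{>k}$ is the smallest element of $R(p)$ greater than $k$; $R(p)_{\le k}$ is the largest element of $R(p)$ less than or equal to $k$. $\Gamma'(P,R)$ is the poset on $\{(p,k):p\in P,k\in R(p)^*\}$ whose order is the reflexive–transitive closure of the relation $(p_1,k_1)\lessdot(p_2,k_2)$, holding iff either (1) $p_1=p_2$ and $R(p_1)_{>k_2}=k_1$; or (2) $p_1\lessdot p_2$ in $P$, $R(p_1)_{\le k_2}=k_1$, and there is no $k\in R(p_2)$ with $k>k_2$ and $R(p_1)_{\le k}=k_1$. *)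

theory Defs
  imports Main
begin

text \<open>A finite poset is modelled as a finite carrier set P inside a type of class order,
  with the induced order. Functions P -> int are represented as total functions that are 0
  outside P (extensional).\<close>

definition covP :: "'a::order set \<Rightarrow> 'a \<Rightarrow> 'a \<Rightarrow> bool" where
  "covP P x y \<longleftrightarrow> x \<in> P \<and> y \<in> P \<and> x < y \<and> \<not> (\<exists>z\<in>P. x < z \<and> z < y)"

definition restriction_fn :: "'a set \<Rightarrow> ('a \<Rightarrow> int set) \<Rightarrow> bool" where
  "restriction_fn P R \<longleftrightarrow> (\<forall>p\<in>P. R p \<noteq> {} \<and> finite (R p))"

definition weakly_consistent :: "'a::order set \<Rightarrow> ('a \<Rightarrow> int set) \<Rightarrow> bool" where
  "weakly_consistent P R \<longleftrightarrow> restriction_fn P R \<and>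
     (\<forall>x y. covP P x y \<longrightarrow> Min (R x) \<le> Min (R y) \<and> Max (R x) \<le> Max (R y))"

definition WInc :: "'a::order set \<Rightarrow> ('a \<Rightarrow> int set) \<Rightarrow> ('a \<Rightarrow> int) set" where
  "WInc P R = {f. (\<forall>p\<in>P. f p \<in> R p) \<and> (\<forall>p1\<in>P. \<forall>p2\<in>P. p1 < p2 \<longrightarrow> f p1 \<le> f p2)
                  \<and> (\<forall>p. p \<notin> P \<longrightarrow> f p = 0)}"

definition wle :: "'a set \<Rightarrow> ('a \<Rightarrow> int) \<Rightarrow> ('a \<Rightarrow> int) \<Rightarrow> bool" where
  "wle P f g \<longleftrightarrow> (\<forall>p\<in>P. f p \<le> g p)"

definition wmeet :: "('a \<Rightarrow> int) \<Rightarrow> ('a \<Rightarrow> int) \<Rightarrow> ('a \<Rightarrow> int)" where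
  "wmeet f g = (\<lambda>p. min (f p) (g p))"

definition is_top :: "('b \<Rightarrow> 'b \<Rightarrow> bool) \<Rightarrow> 'b set \<Rightarrow> 'b \<Rightarrow> bool" where
  "is_top le L x \<longleftrightarrow> x \<in> L \<and> (\<forall>y\<in>L. le y x)"

definition meet_irreducibles :: "'a::order set \<Rightarrow> ('a \<Rightarrow> int set) \<Rightarrow> ('a \<Rightarrow> int) set" where
  "meet_irreducibles P R = {x \<in> WInc P R. \<not> is_top (wle P) (WInc P R) x \<and>
      (\<forall>y\<in>WInc P R. \<forall>z\<in>WInc P R. x = wmeet y z \<longrightarrow> x = y \<or> x = z)}"

text \<open>R(p)_{>k} = k1 and R(p)_{<=k} = k1, written out (false if no such element exists).\<close>
definition R_gt :: "('a \<Rightarrow> int set) \<Rightarrow> 'a \<Rightarrow> int \<Rightarrow> int \<Rightarrow> bool" where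
  "R_gt R p k k1 \<longleftrightarrow> k1 = Min {j \<in> R p. k < j} \<and> {j \<in> R p. k < j} \<noteq> {}"

definition R_le :: "('a \<Rightarrow> int set) \<Rightarrow> 'a \<Rightarrow> int \<Rightarrow> int \<Rightarrow> bool" where
  "R_le R p k k1 \<longleftrightarrow> k1 = Max {j \<in> R p. j \<le> k} \<and> {j \<in> R p. j \<le> k} \<noteq> {}"

definition Rstar :: "('a \<Rightarrow> int set) \<Rightarrow> 'a \<Rightarrow> int set" where
  "Rstar R p = R p - {Max (R p)}"

definition Gamma_set :: "'a set \<Rightarrow> ('a \<Rightarrow> int set) \<Rightarrow> ('a \<times> int) set" where
  "Gamma_set P R = {(p, k). p \<in> P \<and> k \<in> Rstar R p}"

definition Gamma_cov :: "'a::order set \<Rightarrow> ('a \<Rightarrow> int set) \<Rightarrow> ('a \<times> int) \<Rightarrow> ('a \<times> int) \<Rightarrow> bool" where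
  "Gamma_cov P R a b \<longleftrightarrow> (case (a, b) of ((p1, k1), (p2, k2)) \<Rightarrow>
      (p1 = p2 \<and> R_gt R p1 k2 k1) \<or>
      (covP P p1 p2 \<and> R_le R p1 k2 k1 \<and> \<not> (\<exists>k\<in>R p2. k > k2 \<and> R_le R p1 k k1)))"

definition Gamma_le :: "'a::order set \<Rightarrow> ('a \<Rightarrow> int set) \<Rightarrow> ('a \<times> int) \<Rightarrow> ('a \<times> int) \<Rightarrow> bool" where
  "Gamma_le P R a b \<longleftrightarrow>
     (a, b) \<in> {(x, y). x \<in> Gamma_set P R \<and> y \<in> Gamma_set P R \<and> Gamma_cov P R x y}\<^sup>*"

definition order_ideals :: "('b \<Rightarrow> 'b \<Rightarrow> bool) \<Rightarrow> 'b set \<Rightarrow> 'b set set" where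
  "order_ideals le S = {I. I \<subseteq> S \<and> (\<forall>x\<in>I. \<forall>y\<in>S. le y x \<longrightarrow> y \<in> I)}"

end

theory Submission
  imports Defs
begin

locale wcs =
  fixes P :: "'a::order set" and R :: "'a \<Rightarrow> int set"
  assumes finP: "finite P" and wc: "weakly_consistent P R"
begin

abbreviation "G \<equiv> Gamma_set P R"
abbreviation "Le \<equiv> Gamma_le P R"
abbreviation "rel \<equiv> {(x, y). x \<in> G \<and> y \<in> G \<and> Gamma_cov P R x y}"

definition psi :: "('a \<times> int) set \<Rightarrow> 'a \<Rightarrow> int" where
  "psi I p = (if p \<in> P then Min ({k \<in> Rstar R p. (p,k) \<in> I} \<union> {Max (R p)}) else 0)"

definition Idf :: "('a \<Rightarrow> int) \<Rightarrow> ('a \<times> int) set" where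
  "Idf f = {x \<in> G. f (fst x) \<le> snd x}"

definition Dn :: "'a \<times> int \<Rightarrow> ('a \<times> int) set" where
  "Dn a = {b \<in> G. Le b a}"

lemma finR: "p \<in> P \<Longrightarrow> finite (R p)"
  using wc unfolding weakly_consistent_def restriction_fn_def by blast

lemma neR: "p \<in> P \<Longrightarrow> R p \<noteq> {}"
  using wc unfolding weakly_consistent_def restriction_fn_def by blast

lemma covMin: "covP P x y \<Longrightarrow> Min (R x) \<le> Min (R y)"
  using wc unfolding weakly_consistent_def by blast

lemma covMax: "covP P x y \<Longrightarrow> Max (R x) \<le> Max (R y)"
  using wc unfolding weakly_consistent_def by blast

lemma covD: "covP P x y \<Longrightarrow> x \<in> P \<and> y \<in> P \<and> x < y"
  unfolding covP_def by blast

lemma Rstar_R: "k \<in> Rstar R p \<Longrightarrow> k \<in> R p"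
  unfolding Rstar_def by blast

lemma Rstar_lt: "p \<in> P \<Longrightarrow> k \<in> Rstar R p \<Longrightarrow> k < Max (R p)"
proof -
  assume a: "p \<in> P" "k \<in> Rstar R p"
  have "k \<in> R p" "k \<noteq> Max (R p)" using a(2) unfolding Rstar_def by auto
  moreover have "k \<le> Max (R p)" using Max_ge[OF finR[OF a(1)]] calculation(1) by blast
  ultimately show "k < Max (R p)" by simp
qed

lemma Rstar_I: "k \<in> R p \<Longrightarrow> k \<noteq> Max (R p) \<Longrightarrow> k \<in> Rstar R p"
  unfolding Rstar_def by blast

lemma G_iff: "(p, k) \<in> G \<longleftrightarrow> p \<in> P \<and> k \<in> Rstar R p"
  unfolding Gamma_set_def by blast

lemma G_finite: "finite G"
proof -
  have "G \<subseteq> P \<times> (\<Union>p\<in>P. R p)"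
    unfolding Gamma_set_def Rstar_def by auto
  moreover have "finite (P \<times> (\<Union>p\<in>P. R p))" using finP finR by auto
  ultimately show ?thesis using finite_subset by blast
qed

lemma Le_refl: "Le a a" unfolding Gamma_le_def by simp

lemma Le_trans: "Le a b \<Longrightarrow> Le b c \<Longrightarrow> Le a c"
  unfolding Gamma_le_def by (meson rtrancl_trans)

lemma Le_step: "a \<in> G \<Longrightarrow> b \<in> G \<Longrightarrow> Gamma_cov P R a b \<Longrightarrow> Le a b"
  unfolding Gamma_le_def by (intro r_into_rtrancl) simp

lemma fiber:
  assumes p: "p \<in> P" and k: "k \<in> Rstar R p" and k': "k' \<in> Rstar R p" "k' \<le> k"
  shows "Le (p,k) (p,k')"
proof -
  have "\<forall>k'. k' \<in> Rstar R p \<longrightarrow> k' \<le> k \<longrightarrow> card {j\<in>R p. k'<j \<and> j\<le>k} = n \<longrightarrow> Le (p,k) (p,k')" for n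
  proof (induction n rule: less_induct)
    case (less n)
    show ?case
    proof (intro allI impI)
      fix k' assume k': "k' \<in> Rstar R p" "k' \<le> k" "card {j\<in>R p. k'<j \<and> j\<le>k} = n"
      show "Le (p,k) (p,k')"
      proof (cases "k' = k")
        case True then show ?thesis by (simp add: Le_refl)
      next
        case False
        define A where "A = {j\<in>R p. k'<j}"
        have kR: "k \<in> R p" using k Rstar_R by blast
        have kA: "k \<in> A" using False k' kR unfolding A_def by auto
        have finA: "finite A" using finR[OF p] unfolding A_def by auto
        define k1 where "k1 = Min A"
        have k1A: "k1 \<in> A" using finA kA Min_in unfolding k1_def by blast
        have k1k: "k1 \<le> k" using finA kA unfolding k1_def by simp
        have k1R: "k1 \<in> R p" using k1A unfolding A_def by blast
        have "k < Max (R p)" using Rstar_lt[OF p k] .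
        hence k1s: "k1 \<in> Rstar R p" using k1k k1R Rstar_I by force
        have "R_gt R p k' k1" unfolding R_gt_def using kA A_def k1_def by blast
        hence cov: "Gamma_cov P R (p,k1) (p,k')"
          unfolding Gamma_cov_def by simp
        have st: "Le (p,k1) (p,k')" using Le_step cov k1s k'(1) p G_iff by blast
        have sub: "{j\<in>R p. k1<j \<and> j\<le>k} \<subset> {j\<in>R p. k'<j \<and> j\<le>k}"
          using k1A k1k k1R unfolding A_def by auto
        have "card {j\<in>R p. k1<j \<and> j\<le>k} < n"
          using psubset_card_mono[OF _ sub] finR[OF p] k'(3) by auto
        hence "Le (p,k) (p,k1)" using less k1s k1k by blast
        thus ?thesis using st Le_trans by blast
      qed
    qed
  qed
  thus ?thesis using k' by blast
qed

lemma cover_mono: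
  assumes step: "\<And>x y. covP P x y \<Longrightarrow> (g::'a\<Rightarrow>int) x \<le> g y"
  shows "x \<in> P \<Longrightarrow> y \<in> P \<Longrightarrow> x < y \<Longrightarrow> g x \<le> g y"
proof -
  have "\<forall>x y. x \<in> P \<longrightarrow> y \<in> P \<longrightarrow> x < y \<longrightarrow> card {z\<in>P. x<z \<and> z<y} = n \<longrightarrow> g x \<le> g y" for n
  proof (induction n rule: less_induct)
    case (less n)
    show ?case
    proof (intro allI impI)
      fix x y assume xy: "x \<in> P" "y \<in> P" "x < y" "card {z\<in>P. x<z \<and> z<y} = n"
      show "g x \<le> g y"
      proof (cases "\<exists>z\<in>P. x<z \<and> z<y")
        case False
        then have "covP P x y" unfolding covP_def using xy by blast
        then show ?thesis using step by blast
      next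
        case True
        then obtain z where z: "z \<in> P" "x < z" "z < y" by blast
        have f: "finite {z\<in>P. x<z \<and> z<y}" using finP by auto
        have s1: "{w\<in>P. x<w \<and> w<z} \<subset> {w\<in>P. x<w \<and> w<y}" using z by auto
        have s2: "{w\<in>P. z<w \<and> w<y} \<subset> {w\<in>P. x<w \<and> w<y}" using z by auto
        have "card {w\<in>P. x<w \<and> w<z} < n" using psubset_card_mono[OF f s1] xy(4) by simp
        hence a: "g x \<le> g z" using less xy z by blast
        have "card {w\<in>P. z<w \<and> w<y} < n" using psubset_card_mono[OF f s2] xy(4) by simp
        hence b: "g z \<le> g y" using less xy z by blast
        show ?thesis using a b by simp
      qed
    qed
  qed
  thus "x \<in> P \<Longrightarrow> y \<in> P \<Longrightarrow> x < y \<Longrightarrow> g x \<le> g y" by blast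
qed

lemma Le_mono: "Le a b \<Longrightarrow> fst a < fst b \<or> (fst a = fst b \<and> snd b \<le> snd a)"
  unfolding Gamma_le_def
proof (induction rule: rtrancl_induct)
  case base then show ?case by simp
next
  case (step y z)
  obtain p1 k1 where y: "y = (p1,k1)" by fastforce
  obtain p2 k2 where z: "z = (p2,k2)" by fastforce
  have p1: "p1 \<in> P" using step(2) y G_iff by auto
  have cv: "Gamma_cov P R (p1,k1) (p2,k2)" using step(2) y z by auto
  have "p1 < p2 \<or> (p1 = p2 \<and> k2 < k1)"
  proof (cases "p1 = p2 \<and> R_gt R p1 k2 k1")
    case True
    then have e: "k1 = Min {j \<in> R p1. k2 < j}" "{j \<in> R p1. k2 < j} \<noteq> {}"
      unfolding R_gt_def by auto
    have "finite {j \<in> R p1. k2 < j}" using finR[OF p1] by simp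
    then have "k1 \<in> {j \<in> R p1. k2 < j}" using e Min_in by metis
    then show ?thesis using True by simp
  next
    case False
    then have "covP P p1 p2" using cv unfolding Gamma_cov_def by auto
    then show ?thesis using covD by blast
  qed
  then show ?case
  proof
    assume "p1 < p2"
    then have yz: "fst y < fst z" using y z by simp
    show ?thesis
    proof (cases "fst a < fst y")
      case True then show ?thesis using yz by (metis less_trans)
    next
      case False then show ?thesis using yz step(3) by metis
    qed
  next
    assume "p1 = p2 \<and> k2 < k1"
    then have "fst y = fst z" "snd z \<le> snd y" using y z by auto
    then show ?thesis using step(3) by auto
  qed
qed

lemma Le_antisym: "Le a b \<Longrightarrow> Le b a \<Longrightarrow> a = b"
proof -
  assume a: "Le a b" "Le b a"
  have h1: "fst a < fst b \<or> (fst a = fst b \<and> snd b \<le> snd a)" using Le_mono[OF a(1)] .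
  have h2: "fst b < fst a \<or> (fst b = fst a \<and> snd a \<le> snd b)" using Le_mono[OF a(2)] .
  have "fst a = fst b \<and> snd a = snd b"
    using h1 h2 less_asym less_imp_neq by (metis order.asym antisym)
  then show "a = b" by (simp add: prod_eq_iff)
qed


abbreviation "Ideals \<equiv> order_ideals Le G"

lemma idealD: "I \<in> Ideals \<Longrightarrow> x \<in> I \<Longrightarrow> y \<in> G \<Longrightarrow> Le y x \<Longrightarrow> y \<in> I"
  unfolding order_ideals_def by blast

lemma idealG: "I \<in> Ideals \<Longrightarrow> I \<subseteq> G"
  unfolding order_ideals_def by blast

lemma idealI: "I \<subseteq> G \<Longrightarrow> (\<And>x y. x \<in> I \<Longrightarrow> y \<in> G \<Longrightarrow> Le y x \<Longrightarrow> y \<in> I) \<Longrightarrow> I \<in> Ideals"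
  unfolding order_ideals_def by blast

lemma WInc_R: "f \<in> WInc P R \<Longrightarrow> p \<in> P \<Longrightarrow> f p \<in> R p"
  unfolding WInc_def by blast

lemma WInc_mono: "f \<in> WInc P R \<Longrightarrow> p1 \<in> P \<Longrightarrow> p2 \<in> P \<Longrightarrow> p1 < p2 \<Longrightarrow> f p1 \<le> f p2"
  unfolding WInc_def by blast

lemma WInc_out: "f \<in> WInc P R \<Longrightarrow> p \<notin> P \<Longrightarrow> f p = 0"
  unfolding WInc_def by blast

lemma le_Max: "p \<in> P \<Longrightarrow> k \<in> R p \<Longrightarrow> k \<le> Max (R p)"
  using Max_ge[OF finR] by blast

lemma Max_R: "p \<in> P \<Longrightarrow> Max (R p) \<in> R p"
  using Max_in[OF finR neR] by blast

lemma Min_R: "p \<in> P \<Longrightarrow> Min (R p) \<in> R p"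
  using Min_in[OF finR neR] by blast

lemma Min_le_R: "p \<in> P \<Longrightarrow> k \<in> R p \<Longrightarrow> Min (R p) \<le> k"
  using Min_le[OF finR] by blast

lemma S_fin: "p \<in> P \<Longrightarrow> finite ({k \<in> Rstar R p. (p,k) \<in> I} \<union> {Max (R p)})"
proof -
  assume p: "p \<in> P"
  have "{k \<in> Rstar R p. (p,k) \<in> I} \<subseteq> R p" using Rstar_R by blast
  then show ?thesis using finR[OF p] finite_subset by auto
qed

lemma psi_in: "p \<in> P \<Longrightarrow> psi I p \<in> {k \<in> Rstar R p. (p,k) \<in> I} \<union> {Max (R p)}"
  unfolding psi_def using Min_in[OF S_fin] by simp

lemma psi_le: "p \<in> P \<Longrightarrow> k \<in> Rstar R p \<Longrightarrow> (p,k) \<in> I \<Longrightarrow> psi I p \<le> k"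
  unfolding psi_def using Min_le[OF S_fin] by simp

lemma psi_leMax: "p \<in> P \<Longrightarrow> psi I p \<le> Max (R p)"
  unfolding psi_def using Min_le[OF S_fin] by simp

lemma psi_R: "p \<in> P \<Longrightarrow> psi I p \<in> R p"
proof -
  assume p: "p \<in> P"
  show ?thesis using psi_in[OF p, of I] Rstar_R Max_R[OF p] by auto
qed

lemma psi_cases: "p \<in> P \<Longrightarrow> psi I p = Max (R p) \<or> (psi I p \<in> Rstar R p \<and> (p, psi I p) \<in> I)"
  using psi_in[of p I] by auto

lemma psi_out: "p \<notin> P \<Longrightarrow> psi I p = 0"
  unfolding psi_def by simp

lemma Idf_step:
  assumes f: "f \<in> WInc P R" and y: "y \<in> G" and z: "z \<in> G" and cv: "Gamma_cov P R y z"
    and fz: "f (fst z) \<le> snd z"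
  shows "f (fst y) \<le> snd y"
proof -
  obtain p1 k1 where yy: "y = (p1,k1)" by fastforce
  obtain p2 k2 where zz: "z = (p2,k2)" by fastforce
  have p1: "p1 \<in> P" using y yy G_iff by auto
  have cv': "(p1 = p2 \<and> R_gt R p1 k2 k1) \<or>
      (covP P p1 p2 \<and> R_le R p1 k2 k1 \<and> \<not> (\<exists>k\<in>R p2. k > k2 \<and> R_le R p1 k k1))"
    using cv yy zz unfolding Gamma_cov_def by simp
  show ?thesis
  proof (cases "p1 = p2 \<and> R_gt R p1 k2 k1")
    case True
    then have e: "k1 = Min {j \<in> R p1. k2 < j}" "{j \<in> R p1. k2 < j} \<noteq> {}"
      unfolding R_gt_def by auto
    have "finite {j \<in> R p1. k2 < j}" using finR[OF p1] by simp
    then have "k1 \<in> {j \<in> R p1. k2 < j}" using e Min_in by metis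
    then show ?thesis using True fz yy zz by simp
  next
    case False
    then have c: "covP P p1 p2" "R_le R p1 k2 k1" using cv' by auto
    have "f p1 \<le> f p2" using WInc_mono[OF f] covD[OF c(1)] by blast
    then have a: "f p1 \<le> k2" using fz zz by simp
    have e: "k1 = Max {j \<in> R p1. j \<le> k2}" using c(2) unfolding R_le_def by simp
    have "finite {j \<in> R p1. j \<le> k2}" using finR[OF p1] by simp
    moreover have "f p1 \<in> {j \<in> R p1. j \<le> k2}" using a WInc_R[OF f p1] by simp
    ultimately have "f p1 \<le> k1" using e Max_ge by metis
    then show ?thesis using yy by simp
  qed
qed

lemma Idf_ideal: "f \<in> WInc P R \<Longrightarrow> Idf f \<in> Ideals"
proof (rule idealI)
  assume f: "f \<in> WInc P R"
  show "Idf f \<subseteq> G" unfolding Idf_def by blast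
  fix x y assume x: "x \<in> Idf f" and y: "y \<in> G" and le: "Le y x"
  have "(y, x) \<in> rel\<^sup>*" using le unfolding Gamma_le_def .
  then show "y \<in> Idf f"
  proof (induction rule: converse_rtrancl_induct)
    case base then show ?case using x .
  next
    case (step u v)
    have "u \<in> G" "v \<in> G" "Gamma_cov P R u v" using step(1) by auto
    moreover have "f (fst v) \<le> snd v" using step(3) unfolding Idf_def by blast
    ultimately have "f (fst u) \<le> snd u" using Idf_step[OF f] by blast
    then show ?case using \<open>u \<in> G\<close> unfolding Idf_def by blast
  qed
qed

lemma psi_Idf: "f \<in> WInc P R \<Longrightarrow> psi (Idf f) = f"
proof
  fix p assume f: "f \<in> WInc P R"
  show "psi (Idf f) p = f p"
  proof (cases "p \<in> P")
    case False then show ?thesis using psi_out WInc_out[OF f] by simp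
  next
    case p: True
    have fR: "f p \<in> R p" using WInc_R[OF f p] .
    have fM: "f p \<le> Max (R p)" using le_Max[OF p fR] .
    have ge: "f p \<le> psi (Idf f) p"
      using psi_in[OF p, of "Idf f"] fM unfolding Idf_def by auto
    have le: "psi (Idf f) p \<le> f p"
    proof (cases "f p = Max (R p)")
      case True then show ?thesis using psi_leMax[OF p] by simp
    next
      case False
      then have "f p \<in> Rstar R p" using Rstar_I fR by blast
      moreover then have "(p, f p) \<in> Idf f" unfolding Idf_def using p G_iff by auto
      ultimately show ?thesis using psi_le[OF p] by blast
    qed
    show ?thesis using ge le by simp
  qed
qed

lemma Idf_psi: "I \<in> Ideals \<Longrightarrow> Idf (psi I) = I"
proof
  assume I: "I \<in> Ideals"
  show "I \<subseteq> Idf (psi I)"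
  proof
    fix x assume x: "x \<in> I"
    obtain p k where xx: "x = (p,k)" by fastforce
    have "x \<in> G" using idealG[OF I] x by blast
    then have pk: "p \<in> P" "k \<in> Rstar R p" using xx G_iff by auto
    have "psi I p \<le> k" using psi_le[OF pk] x xx by simp
    then show "x \<in> Idf (psi I)" unfolding Idf_def using \<open>x \<in> G\<close> xx by simp
  qed
  show "Idf (psi I) \<subseteq> I"
  proof
    fix x assume x: "x \<in> Idf (psi I)"
    obtain p k where xx: "x = (p,k)" by fastforce
    have xG: "x \<in> G" and le: "psi I p \<le> k" using x xx unfolding Idf_def by auto
    then have pk: "p \<in> P" "k \<in> Rstar R p" using xx G_iff by auto
    have "psi I p \<noteq> Max (R p)" using Rstar_lt[OF pk] le by simp
    then have c: "psi I p \<in> Rstar R p" "(p, psi I p) \<in> I" using psi_cases[OF pk(1), of I] by auto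
    have "Le (p,k) (p, psi I p)" using fiber[OF pk c(1) le] .
    then show "x \<in> I" using idealD[OF I c(2) xG] xx by simp
  qed
qed


lemma psi_cover:
  assumes I: "I \<in> Ideals" and cv: "covP P p1 p2"
  shows "psi I p1 \<le> psi I p2"
proof -
  have p1: "p1 \<in> P" and p2: "p2 \<in> P" and lt: "p1 < p2" using covD[OF cv] by auto
  show ?thesis
  proof (cases "psi I p2 = Max (R p2)")
    case True
    then show ?thesis using psi_leMax[OF p1, of I] covMax[OF cv] by simp
  next
    case False
    define k2 where "k2 = psi I p2"
    have k2s: "k2 \<in> Rstar R p2" and k2I: "(p2,k2) \<in> I"
      using psi_cases[OF p2, of I] False unfolding k2_def by auto
    have k2R: "k2 \<in> R p2" using Rstar_R[OF k2s] .
    define T where "T = {j \<in> R p1. j \<le> k2}"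
    have finT: "finite T" using finR[OF p1] unfolding T_def by simp
    have "Min (R p1) \<le> Min (R p2)" using covMin[OF cv] .
    moreover have "Min (R p2) \<le> k2" using Min_le_R[OF p2 k2R] .
    ultimately have "Min (R p1) \<in> T" using Min_R[OF p1] unfolding T_def by simp
    then have neT: "T \<noteq> {}" by blast
    define k1 where "k1 = Max T"
    have k1T: "k1 \<in> T" using Max_in[OF finT neT] unfolding k1_def .
    have k1k2: "k1 \<le> k2" and k1R: "k1 \<in> R p1" using k1T unfolding T_def by auto
    show ?thesis
    proof (cases "k1 = Max (R p1)")
      case True
      then show ?thesis using psi_leMax[OF p1, of I] k1k2 k2_def by simp
    next
      case False
      have k1s: "k1 \<in> Rstar R p1" using Rstar_I[OF k1R False] .
      define U where "U = {k \<in> R p2. k2 \<le> k \<and> Max {j \<in> R p1. j \<le> k} = k1}"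
      have finU: "finite U" using finR[OF p2] unfolding U_def by simp
      have k2U: "k2 \<in> U" unfolding U_def using k2R k1_def T_def by simp
      define k2' where "k2' = Max U"
      have k2'U: "k2' \<in> U" using Max_in[OF finU] k2U unfolding k2'_def by blast
      have k2'R: "k2' \<in> R p2" and k2k2': "k2 \<le> k2'"
        and k2'e: "Max {j \<in> R p1. j \<le> k2'} = k1" using k2'U unfolding U_def by auto
      have "k2' \<noteq> Max (R p2)"
      proof
        assume eq: "k2' = Max (R p2)"
        have "{j \<in> R p1. j \<le> k2'} = R p1"
        proof -
          have "\<forall>j \<in> R p1. j \<le> k2'"
            using le_Max[OF p1] covMax[OF cv] eq by force
          then show ?thesis by blast
        qed
        then show False using k2'e False by simp
      qed
      then have k2's: "k2' \<in> Rstar R p2" using Rstar_I[OF k2'R] by blast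
      have rle: "R_le R p1 k2' k1"
        unfolding R_le_def using k2'e k1R k1k2 k2k2' by auto
      have nex: "\<not> (\<exists>k\<in>R p2. k > k2' \<and> R_le R p1 k k1)"
      proof
        assume "\<exists>k\<in>R p2. k > k2' \<and> R_le R p1 k k1"
        then obtain k where k: "k \<in> R p2" "k > k2'" "R_le R p1 k k1" by blast
        have "k \<in> U" unfolding U_def using k k2k2' unfolding R_le_def by auto
        then have "k \<le> k2'" using Max_ge[OF finU] unfolding k2'_def by blast
        then show False using k(2) by simp
      qed
      have cov2: "Gamma_cov P R (p1,k1) (p2,k2')"
        unfolding Gamma_cov_def using cv rle nex by simp
      have G1: "(p1,k1) \<in> G" using G_iff p1 k1s by simp
      have G2: "(p2,k2') \<in> G" using G_iff p2 k2's by simp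
      have "Le (p2,k2') (p2,k2)" using fiber[OF p2 k2's k2s k2k2'] .
      then have "(p2,k2') \<in> I" using idealD[OF I k2I G2] by blast
      moreover have "Le (p1,k1) (p2,k2')" using Le_step[OF G1 G2 cov2] .
      ultimately have "(p1,k1) \<in> I" using idealD[OF I _ G1] by blast
      then have "psi I p1 \<le> k1" using psi_le[OF p1 k1s] by blast
      then show ?thesis using k1k2 k2_def by simp
    qed
  qed
qed

lemma psi_WInc: "I \<in> Ideals \<Longrightarrow> psi I \<in> WInc P R"
proof -
  assume I: "I \<in> Ideals"
  have "\<forall>p1\<in>P. \<forall>p2\<in>P. p1 < p2 \<longrightarrow> psi I p1 \<le> psi I p2"
    using cover_mono[of "psi I"] psi_cover[OF I] by blast
  then show ?thesis unfolding WInc_def using psi_R psi_out by blast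
qed

lemma wle_Idf: "f \<in> WInc P R \<Longrightarrow> g \<in> WInc P R \<Longrightarrow> wle P f g \<longleftrightarrow> Idf g \<subseteq> Idf f"
proof
  assume f: "f \<in> WInc P R" and g: "g \<in> WInc P R"
  {
    assume w: "wle P f g"
    show "Idf g \<subseteq> Idf f"
    proof
      fix x assume x: "x \<in> Idf g"
      then have "x \<in> G" "g (fst x) \<le> snd x" unfolding Idf_def by auto
      moreover then have "fst x \<in> P" unfolding Gamma_set_def by auto
      ultimately show "x \<in> Idf f" using w unfolding wle_def Idf_def by force
    qed
  }
  {
    assume sub: "Idf g \<subseteq> Idf f"
    show "wle P f g" unfolding wle_def
    proof
      fix p assume p: "p \<in> P"
      show "f p \<le> g p"
      proof (cases "g p = Max (R p)")
        case True then show ?thesis using le_Max[OF p WInc_R[OF f p]] by simp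
      next
        case False
        then have "g p \<in> Rstar R p" using Rstar_I WInc_R[OF g p] by blast
        then have "(p, g p) \<in> Idf g" unfolding Idf_def using G_iff p by simp
        then have "(p, g p) \<in> Idf f" using sub by blast
        then show ?thesis unfolding Idf_def by simp
      qed
    qed
  }
qed

lemma Idf_wmeet: "Idf (wmeet f g) = Idf f \<union> Idf g"
  unfolding Idf_def wmeet_def by auto

lemma psi_Un: "psi (J \<union> K) = wmeet (psi J) (psi K)"
proof
  fix p
  show "psi (J \<union> K) p = wmeet (psi J) (psi K) p"
  proof (cases "p \<in> P")
    case False then show ?thesis unfolding wmeet_def using psi_out by simp
  next
    case p: True
    have e: "{k \<in> Rstar R p. (p,k) \<in> J \<union> K} \<union> {Max (R p)} =
       ({k \<in> Rstar R p. (p,k) \<in> J} \<union> {Max (R p)}) \<union> ({k \<in> Rstar R p. (p,k) \<in> K} \<union> {Max (R p)})"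
      by auto
    define A where "A = {k \<in> Rstar R p. (p,k) \<in> J} \<union> {Max (R p)}"
    define B where "B = {k \<in> Rstar R p. (p,k) \<in> K} \<union> {Max (R p)}"
    have m: "Min (A \<union> B) = min (Min A) (Min B)"
      using Min_Un[OF S_fin[OF p] _ S_fin[OF p]] unfolding A_def B_def by blast
    have "psi (J \<union> K) p = Min (A \<union> B)" unfolding psi_def A_def B_def using p e by metis
    moreover have "psi J p = Min A" "psi K p = Min B" unfolding psi_def A_def B_def using p by auto
    ultimately show ?thesis unfolding wmeet_def using m by simp
  qed
qed


lemma Dn_ideal: "Dn a \<in> Ideals"
  unfolding Dn_def by (rule idealI) (auto intro: Le_trans)

lemma Dn_self: "a \<in> G \<Longrightarrow> a \<in> Dn a"
  unfolding Dn_def using Le_refl by blast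

lemma Dn_sub: "a \<in> G \<Longrightarrow> Dn a \<subseteq> Dn b \<longleftrightarrow> Le a b"
proof
  assume a: "a \<in> G" and s: "Dn a \<subseteq> Dn b"
  then have "a \<in> Dn b" using Dn_self[OF a] by blast
  then show "Le a b" unfolding Dn_def by blast
next
  assume "Le a b" then show "Dn a \<subseteq> Dn b" unfolding Dn_def by (auto intro: Le_trans)
qed

lemma empty_ideal: "{} \<in> Ideals"
  by (rule idealI) auto

lemma psi_empty_top: "y \<in> WInc P R \<Longrightarrow> wle P y (psi {})"
  unfolding wle_def psi_def using le_Max WInc_R by simp

lemma part2: "bij_betw psi Ideals (WInc P R)"
  by (rule bij_betw_byWitness[where f'=Idf]) (auto simp: Idf_psi psi_Idf psi_WInc Idf_ideal)

lemma phi_WInc: "psi (Dn a) \<in> WInc P R"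
  using psi_WInc[OF Dn_ideal] .

lemma Idf_phi: "Idf (psi (Dn a)) = Dn a"
  using Idf_psi[OF Dn_ideal] .

lemma phi_order: "a \<in> G \<Longrightarrow> b \<in> G \<Longrightarrow> Le a b \<longleftrightarrow> wle P (psi (Dn b)) (psi (Dn a))"
  using wle_Idf[OF phi_WInc phi_WInc] Idf_phi Dn_sub by simp

lemma phi_inj: "inj_on (\<lambda>a. psi (Dn a)) G"
proof (rule inj_onI)
  fix a b assume a: "a \<in> G" and b: "b \<in> G" and e: "psi (Dn a) = psi (Dn b)"
  then have "Dn a = Dn b" using Idf_phi by metis
  then have "Le a b" "Le b a" using Dn_sub[OF a, of b] Dn_sub[OF b, of a] by auto
  then show "a = b" using Le_antisym by blast
qed

lemma phi_MI: "a \<in> G \<Longrightarrow> psi (Dn a) \<in> meet_irreducibles P R"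
proof -
  assume a: "a \<in> G"
  have nt: "\<not> is_top (wle P) (WInc P R) (psi (Dn a))"
  proof
    assume "is_top (wle P) (WInc P R) (psi (Dn a))"
    then have "wle P (psi {}) (psi (Dn a))"
      unfolding is_top_def using psi_WInc[OF empty_ideal] by blast
    then have "Idf (psi (Dn a)) \<subseteq> Idf (psi {})"
      using wle_Idf[OF psi_WInc[OF empty_ideal] phi_WInc] by blast
    then have "Dn a \<subseteq> {}" using Idf_phi Idf_psi[OF empty_ideal] by simp
    then show False using Dn_self[OF a] by blast
  qed
  have irr: "\<forall>y\<in>WInc P R. \<forall>z\<in>WInc P R. psi (Dn a) = wmeet y z \<longrightarrow> psi (Dn a) = y \<or> psi (Dn a) = z"
  proof (intro ballI impI)
    fix y z assume y: "y \<in> WInc P R" and z: "z \<in> WInc P R" and e: "psi (Dn a) = wmeet y z"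
    have D: "Dn a = Idf y \<union> Idf z" using Idf_phi[of a] e Idf_wmeet by simp
    have key: "Idf w = Dn a" if w: "w \<in> WInc P R" and aw: "a \<in> Idf w" and sub: "Idf w \<subseteq> Dn a" for w
    proof
      show "Idf w \<subseteq> Dn a" using sub .
      show "Dn a \<subseteq> Idf w"
      proof
        fix b assume "b \<in> Dn a"
        then have "b \<in> G" "Le b a" unfolding Dn_def by auto
        then show "b \<in> Idf w" using idealD[OF Idf_ideal[OF w] aw] by blast
      qed
    qed
    have "a \<in> Idf y \<or> a \<in> Idf z" using D Dn_self[OF a] by blast
    then show "psi (Dn a) = y \<or> psi (Dn a) = z"
    proof
      assume "a \<in> Idf y"
      then have "Idf y = Dn a" using key[OF y] D by blast
      then have "psi (Dn a) = y" using psi_Idf[OF y] by simp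
      then show ?thesis by simp
    next
      assume "a \<in> Idf z"
      then have "Idf z = Dn a" using key[OF z] D by blast
      then have "psi (Dn a) = z" using psi_Idf[OF z] by simp
      then show ?thesis by simp
    qed
  qed
  show ?thesis unfolding meet_irreducibles_def using phi_WInc nt irr by blast
qed

lemma MI_phi: "x \<in> meet_irreducibles P R \<Longrightarrow> x \<in> (\<lambda>a. psi (Dn a)) ` G"
proof -
  assume x: "x \<in> meet_irreducibles P R"
  have xW: "x \<in> WInc P R" and nt: "\<not> is_top (wle P) (WInc P R) x"
    and irr: "\<forall>y\<in>WInc P R. \<forall>z\<in>WInc P R. x = wmeet y z \<longrightarrow> x = y \<or> x = z"
    using x unfolding meet_irreducibles_def by auto
  define I where "I = Idf x"
  have I: "I \<in> Ideals" using Idf_ideal[OF xW] unfolding I_def .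
  have xI: "x = psi I" using psi_Idf[OF xW] unfolding I_def by simp
  have "I \<noteq> {}"
  proof
    assume "I = {}"
    then have "x = psi {}" using xI by simp
    then have "is_top (wle P) (WInc P R) x"
      unfolding is_top_def using xW psi_empty_top by simp
    then show False using nt by simp
  qed
  have finI: "finite I" using idealG[OF I] G_finite finite_subset by blast
  define c where "c = (\<lambda>u. card (Dn u))"
  have "finite (c ` I)" "c ` I \<noteq> {}" using finI \<open>I \<noteq> {}\<close> by auto
  then have "Max (c ` I) \<in> c ` I" using Max_in by blast
  then obtain m where mI: "m \<in> I" and mmax: "c m = Max (c ` I)" by auto
  have mG: "m \<in> G" using mI idealG[OF I] by blast
  have maximal: "\<And>u. u \<in> I \<Longrightarrow> Le m u \<Longrightarrow> u = m"
  proof (rule ccontr)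
    fix u assume u: "u \<in> I" "Le m u" "u \<noteq> m"
    have uG: "u \<in> G" using u idealG[OF I] by blast
    have "Dn m \<subseteq> Dn u" using Dn_sub[OF mG] u by blast
    moreover have "u \<in> Dn u" using Dn_self[OF uG] .
    moreover have "u \<notin> Dn m"
    proof
      assume "u \<in> Dn m"
      then have "Le u m" unfolding Dn_def by blast
      then show False using Le_antisym u by blast
    qed
    ultimately have ps: "Dn m \<subset> Dn u" by blast
    have "finite (Dn u)" using G_finite unfolding Dn_def by simp
    then have "c m < c u" using psubset_card_mono[OF _ ps] unfolding c_def by simp
    moreover have "c u \<le> Max (c ` I)" using \<open>finite (c ` I)\<close> u(1) by simp
    ultimately show False using mmax by simp
  qed
  define K where "K = I - {m}"
  have K: "K \<in> Ideals"
  proof (rule idealI)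
    show "K \<subseteq> G" using idealG[OF I] unfolding K_def by blast
    fix u y assume u: "u \<in> K" and y: "y \<in> G" and le: "Le y u"
    have "y \<in> I" using idealD[OF I _ y le] u unfolding K_def by blast
    moreover have "y \<noteq> m"
    proof
      assume "y = m"
      then have "u = m" using maximal le u unfolding K_def by blast
      then show False using u unfolding K_def by blast
    qed
    ultimately show "y \<in> K" unfolding K_def by blast
  qed
  have DmI: "Dn m \<subseteq> I" using idealD[OF I mI] unfolding Dn_def by blast
  have IU: "I = Dn m \<union> K" using DmI Dn_self[OF mG] unfolding K_def by blast
  have xm: "x = wmeet (psi (Dn m)) (psi K)" using xI IU psi_Un by simp
  then have "x = psi (Dn m) \<or> x = psi K" using irr phi_WInc psi_WInc[OF K] by blast
  moreover have "x \<noteq> psi K"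
  proof
    assume "x = psi K"
    then have "I = K" using I_def Idf_psi[OF K] by simp
    then show False using mI unfolding K_def by blast
  qed
  ultimately have "x = psi (Dn m)" by blast
  then show ?thesis using mG by blast
qed

lemma part1: "\<exists>\<phi>. bij_betw \<phi> G (meet_irreducibles P R) \<and>
            (\<forall>a\<in>G. \<forall>b\<in>G. Le a b \<longleftrightarrow> wle P (\<phi> b) (\<phi> a))"
proof (intro exI conjI)
  show "bij_betw (\<lambda>a. psi (Dn a)) G (meet_irreducibles P R)"
    unfolding bij_betw_def using phi_inj phi_MI MI_phi by blast
  show "\<forall>a\<in>G. \<forall>b\<in>G. Le a b \<longleftrightarrow> wle P (psi (Dn b)) (psi (Dn a))"
    using phi_order by blast
qed

end

theorem theorem2p25:
  fixes P :: "'a::order set" and R :: "'a \<Rightarrow> int set"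
  assumes "finite P"
    and "weakly_consistent P R"
  shows "(\<exists>\<phi>. bij_betw \<phi> (Gamma_set P R) (meet_irreducibles P R) \<and>
            (\<forall>a\<in>Gamma_set P R. \<forall>b\<in>Gamma_set P R.
               Gamma_le P R a b \<longleftrightarrow> wle P (\<phi> b) (\<phi> a)))
       \<and> (\<exists>\<psi>. bij_betw \<psi> (order_ideals (Gamma_le P R) (Gamma_set P R)) (WInc P R))"
proof -
  interpret wcs P R using assms by unfold_locales
  show ?thesis using part1 part2 by blast
qed

end
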